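(* Let $I$ be a non-degenerate interval, $f:I\to\mathbb{R}$ continuous and $c\ge1$. (i) If the graph of $f$ is $c$-monotone, then $f$ satisfies condition $\mathsf{P}_c$. (ii) If $f$ satisfies condition $\mathsf{P}_{c-1}$, then the graph of $f$ is symmetrically $c$-monotone.
   Context: For $a\ge0$, $f$ satisfies condition $\mathsf{P}_a$ if $\max_{x\le t\le y}|f(x)-f(t)|\le a|x-y|$ whenever $x<y$ in $I$ and $f(x)=f(y)$. A metric space $(X,d)$ is $c$-monotone if there is a linear order $<$ with $d(x,y)\le c\,d(x,z)$ whenever $x<y<z$, and symmetrically $c$-monotone if there is a linear order $<$ with $\max(d(x,y),d(y,z))\le c\,d(x,z)$ whenever $x<y<z$. The graph $\{(x,f(x)):x\in I\}$ carries the Euclidean metric. *)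

theory Defs
  imports "HOL-Analysis.Analysis"
begin

definition cond_P :: "real \<Rightarrow> real set \<Rightarrow> (real \<Rightarrow> real) \<Rightarrow> bool" where
  "cond_P a I f \<longleftrightarrow>
     (\<forall>x\<in>I. \<forall>y\<in>I. x < y \<and> f x = f y \<longrightarrow>
        (\<forall>t\<in>{x..y}. \<bar>f x - f t\<bar> \<le> a * \<bar>x - y\<bar>))"

definition strict_linear_order_on :: "'a set \<Rightarrow> ('a \<Rightarrow> 'a \<Rightarrow> bool) \<Rightarrow> bool" where
  "strict_linear_order_on S lt \<longleftrightarrow>
     (\<forall>x\<in>S. \<not> lt x x) \<and>
     (\<forall>x\<in>S. \<forall>y\<in>S. \<forall>z\<in>S. lt x y \<and> lt y z \<longrightarrow> lt x z) \<and>
     (\<forall>x\<in>S. \<forall>y\<in>S. x \<noteq> y \<longrightarrow> lt x y \<or> lt y x)"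

definition c_monotone :: "real \<Rightarrow> 'a::metric_space set \<Rightarrow> bool" where
  "c_monotone c S \<longleftrightarrow> (\<exists>lt. strict_linear_order_on S lt \<and>
     (\<forall>x\<in>S. \<forall>y\<in>S. \<forall>z\<in>S. lt x y \<and> lt y z \<longrightarrow> dist x y \<le> c * dist x z))"

definition sym_c_monotone :: "real \<Rightarrow> 'a::metric_space set \<Rightarrow> bool" where
  "sym_c_monotone c S \<longleftrightarrow> (\<exists>lt. strict_linear_order_on S lt \<and>
     (\<forall>x\<in>S. \<forall>y\<in>S. \<forall>z\<in>S. lt x y \<and> lt y z \<longrightarrow>
        max (dist x y) (dist y z) \<le> c * dist x z))"

text \<open>Graph of f over I in the Euclidean plane (dist on real \<times> real is Euclidean).\<close>
definition graph_of :: "real set \<Rightarrow> (real \<Rightarrow> real) \<Rightarrow> (real \<times> real) set" where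
  "graph_of I f = (\<lambda>x. (x, f x)) ` I"

end

theory Submission
  imports Defs
begin

lemma side_open:
  fixes lt :: "real \<times> real \<Rightarrow> real \<times> real \<Rightarrow> bool" and g :: "real \<Rightarrow> real \<times> real"
  assumes lin: "strict_linear_order_on S lt"
    and mon: "\<forall>x\<in>S. \<forall>y\<in>S. \<forall>z\<in>S. lt x y \<and> lt y z \<longrightarrow> dist x y \<le> c * dist x z"
    and c: "c \<ge> 1"
    and cont: "continuous_on J g" and sub: "g ` J \<subseteq> S" and Y: "Y \<in> S" "Y \<notin> g ` J"
  shows "openin (top_of_set J) {s\<in>J. lt (g s) Y}"
  unfolding openin_euclidean_subtopology_iff
proof (intro conjI ballI)
  fix s assume s: "s \<in> {s\<in>J. lt (g s) Y}"
  then have sJ: "s \<in> J" and lts: "lt (g s) Y" by auto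
  have gs: "g s \<in> S" using sub sJ by auto
  have ne: "g s \<noteq> Y" using Y sJ by auto
  define \<delta> where "\<delta> = dist (g s) Y / c"
  have dpos: "\<delta> > 0" using ne c by (simp add: \<delta>_def)
  obtain d where d: "d > 0" "\<forall>x'\<in>J. dist x' s < d \<longrightarrow> dist (g x') (g s) < \<delta>"
    using cont sJ dpos unfolding continuous_on_iff by metis
  show "\<exists>e>0. \<forall>x'\<in>J. dist x' s < e \<longrightarrow> x' \<in> {s \<in> J. lt (g s) Y}"
  proof (intro exI[of _ d] conjI d(1) ballI impI)
    fix x' assume x': "x' \<in> J" "dist x' s < d"
    have gx: "g x' \<in> S" using sub x' by auto
    have ne2: "g x' \<noteq> Y" using Y x' by auto
    have close: "dist (g s) (g x') < \<delta>" using d x' by (metis dist_commute)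
    have "lt (g x') Y"
    proof (rule ccontr)
      assume "\<not> lt (g x') Y"
      then have "lt Y (g x')" using lin gx Y ne2 unfolding strict_linear_order_on_def by blast
      then have "dist (g s) Y \<le> c * dist (g s) (g x')" using mon gs gx Y lts by blast
      also have "\<dots> < c * \<delta>" using close c by simp
      also have "\<dots> = dist (g s) Y" using c by (simp add: \<delta>_def)
      finally show False by simp
    qed
    then show "x' \<in> {s \<in> J. lt (g s) Y}" using x' by auto
  qed
qed auto

lemma side_open2:
  fixes lt :: "real \<times> real \<Rightarrow> real \<times> real \<Rightarrow> bool" and g :: "real \<Rightarrow> real \<times> real"
  assumes lin: "strict_linear_order_on S lt"
    and mon: "\<forall>x\<in>S. \<forall>y\<in>S. \<forall>z\<in>S. lt x y \<and> lt y z \<longrightarrow> dist x y \<le> c * dist x z"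
    and c: "c \<ge> 1"
    and cont: "continuous_on J g" and sub: "g ` J \<subseteq> S" and Y: "Y \<in> S" "Y \<notin> g ` J"
  shows "openin (top_of_set J) {s\<in>J. lt Y (g s)}"
  unfolding openin_euclidean_subtopology_iff
proof (intro conjI ballI)
  fix s assume s: "s \<in> {s\<in>J. lt Y (g s)}"
  then have sJ: "s \<in> J" and lts: "lt Y (g s)" by auto
  have gs: "g s \<in> S" using sub sJ by auto
  have ne: "g s \<noteq> Y" using Y sJ by auto
  define \<delta> where "\<delta> = dist (g s) Y / (2*c)"
  have dpos: "\<delta> > 0" using ne c by (simp add: \<delta>_def)
  have dle: "\<delta> \<le> dist (g s) Y / 2" using c ne unfolding \<delta>_def
    by (simp add: divide_simps)
  obtain d where d: "d > 0" "\<forall>x'\<in>J. dist x' s < d \<longrightarrow> dist (g x') (g s) < \<delta>"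
    using cont sJ dpos unfolding continuous_on_iff by metis
  show "\<exists>e>0. \<forall>x'\<in>J. dist x' s < e \<longrightarrow> x' \<in> {s \<in> J. lt Y (g s)}"
  proof (intro exI[of _ d] conjI d(1) ballI impI)
    fix x' assume x': "x' \<in> J" "dist x' s < d"
    have gx: "g x' \<in> S" using sub x' by auto
    have ne2: "g x' \<noteq> Y" using Y x' by auto
    have close: "dist (g x') (g s) < \<delta>" using d x' by simp
    have "lt Y (g x')"
    proof (rule ccontr)
      assume "\<not> lt Y (g x')"
      then have "lt (g x') Y" using lin gx Y ne2 unfolding strict_linear_order_on_def by blast
      then have "dist (g x') Y \<le> c * dist (g x') (g s)" using mon gs gx Y lts by blast
      also have "\<dots> < c * \<delta>" using close c by simp
      also have "\<dots> = dist (g s) Y / 2" using c by (simp add: \<delta>_def)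
      finally have "dist (g x') Y < dist (g s) Y / 2" .
      moreover have "dist (g s) Y \<le> dist (g s) (g x') + dist (g x') Y" by (rule dist_triangle)
      ultimately show False using close dle by (simp add: dist_commute)
    qed
    then show "x' \<in> {s \<in> J. lt Y (g s)}" using x' by auto
  qed
qed auto

lemma same_side:
  fixes lt :: "real \<times> real \<Rightarrow> real \<times> real \<Rightarrow> bool" and g :: "real \<Rightarrow> real \<times> real"
  assumes lin: "strict_linear_order_on S lt"
    and mon: "\<forall>x\<in>S. \<forall>y\<in>S. \<forall>z\<in>S. lt x y \<and> lt y z \<longrightarrow> dist x y \<le> c * dist x z"
    and c: "c \<ge> 1" and conn: "connected J"
    and cont: "continuous_on J g" and sub: "g ` J \<subseteq> S" and Y: "Y \<in> S" "Y \<notin> g ` J"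
    and a: "a \<in> J" "lt (g a) Y" and b: "b \<in> J"
  shows "lt (g b) Y"
proof (rule ccontr)
  assume nb: "\<not> lt (g b) Y"
  have gb: "g b \<in> S" "g b \<noteq> Y" using sub b Y by auto
  then have lb: "lt Y (g b)" using lin nb Y unfolding strict_linear_order_on_def by blast
  have o1: "openin (top_of_set J) {s\<in>J. lt (g s) Y}"
    by (rule side_open[OF lin mon c cont sub Y])
  have o2: "openin (top_of_set J) {s\<in>J. lt Y (g s)}"
    by (rule side_open2[OF lin mon c cont sub Y])
  have cov: "J \<subseteq> {s\<in>J. lt (g s) Y} \<union> {s\<in>J. lt Y (g s)}"
  proof
    fix s assume "s \<in> J"
    then have "g s \<in> S" "g s \<noteq> Y" using sub Y by auto
    then show "s \<in> {s\<in>J. lt (g s) Y} \<union> {s\<in>J. lt Y (g s)}"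
      using lin Y \<open>s \<in> J\<close> unfolding strict_linear_order_on_def by blast
  qed
  have dis: "{s\<in>J. lt (g s) Y} \<inter> {s\<in>J. lt Y (g s)} = {}"
  proof -
    { fix s assume "s \<in> J" "lt (g s) Y" "lt Y (g s)"
      moreover have "g s \<in> S" using sub \<open>s \<in> J\<close> by auto
      ultimately have False using lin Y unfolding strict_linear_order_on_def by blast }
    then show ?thesis by blast
  qed
  show False using conn o1 o2 cov dis a b lb unfolding connected_openin by blast
qed

lemma upper_bound:
  fixes f :: "real \<Rightarrow> real"
  assumes I: "is_interval I" and cont: "continuous_on I f" and P: "cond_P a I f" and a: "a \<ge> 0"
    and x: "x \<in> I" and z: "z \<in> I" and xy: "x < y" and yz: "y < z"
  shows "f y \<le> max (f x) (f z) + a * (z - x)"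
proof -
  have sub: "{x..z} \<subseteq> I"
  proof
    fix t assume "t \<in> {x..z}"
    then show "t \<in> I" using I[unfolded is_interval_1, rule_format, of x z t] x z by simp
  qed
  have yI: "y \<in> I" using sub xy yz by auto
  have az: "a * (z - x) \<ge> 0" using a xy yz by simp
  show ?thesis
  proof (cases "f y \<le> max (f x) (f z)")
    case True then show ?thesis using az by linarith
  next
    case False
    show ?thesis
    proof (cases "f x \<le> f z")
      case True
      have "{x..y} \<subseteq> I" using sub yz by auto
      then have "continuous_on {x..y} f" using cont by (rule continuous_on_subset[rotated])
      moreover have "f x \<le> f z" "f z \<le> f y" "x \<le> y" using True False xy by auto
      ultimately obtain s where s: "x \<le> s" "s \<le> y" "f s = f z"
        using IVT'[of f x "f z" y] by blast
      have sI: "s \<in> I" using sub s yz by auto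
      have "s < z" "f s = f z" "y \<in> {s..z}" using s yz by auto
      then have "\<bar>f s - f y\<bar> \<le> a * \<bar>s - z\<bar>"
        using P[unfolded cond_P_def, rule_format, of s z y] sI z by simp
      moreover have "a * \<bar>s - z\<bar> \<le> a * (z - x)" using a s yz by (intro mult_left_mono) auto
      ultimately show ?thesis using s by linarith
    next
      case False2: False
      have "{y..z} \<subseteq> I" using sub xy by auto
      then have "continuous_on {y..z} f" using cont by (rule continuous_on_subset[rotated])
      moreover have "f z \<le> f x" "f x \<le> f y" "y \<le> z" using False2 False yz by auto
      ultimately obtain s where s: "y \<le> s" "s \<le> z" "f s = f x"
        using IVT2'[of f z "f x" y] by blast
      have sI: "s \<in> I" using sub s xy by auto
      have "x < s" "f x = f s" "y \<in> {x..s}" using s xy by auto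
      then have "\<bar>f x - f y\<bar> \<le> a * \<bar>x - s\<bar>"
        using P[unfolded cond_P_def, rule_format, of x s y] sI x by simp
      moreover have "a * \<bar>x - s\<bar> \<le> a * (z - x)" using a s xy by (intro mult_left_mono) auto
      ultimately show ?thesis using s by linarith
    qed
  qed
qed

lemma sq_bound:
  fixes u v a b c :: real
  assumes "0 \<le> u" "u \<le> a" "0 \<le> v" "v \<le> b + (c-1)*a" "0 \<le> b" "c \<ge> 1"
  shows "sqrt (u^2 + v^2) \<le> c * sqrt (a^2 + b^2)"
proof -
  have "u^2 \<le> a^2" using assms by (intro power_mono) auto
  moreover have "v^2 \<le> (b + (c-1)*a)^2" using assms by (intro power_mono) auto
  moreover have "a^2 + (b + (c-1)*a)^2 \<le> c^2 * (a^2 + b^2)"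
  proof -
    have "0 \<le> (c - 1) * (a^2 + b^2 + (a-b)^2 + (c-1)*b^2)" using assms
      by (intro mult_nonneg_nonneg add_nonneg_nonneg) auto
    moreover have "c^2 * (a^2 + b^2) - (a^2 + (b + (c-1)*a)^2) = (c - 1) * (a^2 + b^2 + (a-b)^2 + (c-1)*b^2)"
      by algebra
    ultimately show ?thesis by linarith
  qed
  ultimately have "u^2 + v^2 \<le> c^2 * (a^2 + b^2)" by linarith
  then have "sqrt (u^2 + v^2) \<le> sqrt (c^2 * (a^2 + b^2))" by (rule real_sqrt_le_mono)
  also have "\<dots> = c * sqrt (a^2 + b^2)" using assms by (simp add: real_sqrt_mult)
  finally show ?thesis .
qed

lemma same_side_flip:
  fixes lt :: "real \<times> real \<Rightarrow> real \<times> real \<Rightarrow> bool" and g :: "real \<Rightarrow> real \<times> real"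
  assumes lin: "strict_linear_order_on S lt"
    and mon: "\<forall>x\<in>S. \<forall>y\<in>S. \<forall>z\<in>S. lt x y \<and> lt y z \<longrightarrow> dist x y \<le> c * dist x z"
    and c: "c \<ge> 1" and conn: "connected J"
    and cont: "continuous_on J g" and sub: "g ` J \<subseteq> S" and Y: "Y \<in> S" "Y \<notin> g ` J"
    and a: "a \<in> J" "lt Y (g a)" and b: "b \<in> J"
  shows "lt Y (g b)"
proof (rule ccontr)
  assume nb: "\<not> lt Y (g b)"
  have gb: "g b \<in> S" "g b \<noteq> Y" using sub b Y by auto
  then have lb: "lt (g b) Y" using lin nb Y unfolding strict_linear_order_on_def by blast
  have "lt (g a) Y" by (rule same_side[OF lin mon c conn cont sub Y b lb a(1)])
  moreover have "g a \<in> S" using sub a by auto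
  ultimately show False using a(2) lin Y unfolding strict_linear_order_on_def by blast
qed

lemma snd_dist_le: "dist (u::real) v \<le> dist (p, u) (q, v)"
  unfolding dist_Pair_Pair by simp

lemma part1:
  fixes I :: "real set" and f :: "real \<Rightarrow> real" and c :: real
  assumes I: "is_interval I" and cont: "continuous_on I f" and c: "c \<ge> 1"
    and cm: "c_monotone c (graph_of I f)"
  shows "cond_P c I f"
proof -
  define G where "G = graph_of I f"
  define g where "g = (\<lambda>s::real. (s, f s))"
  obtain lt where lin: "strict_linear_order_on G lt"
    and mon: "\<forall>x\<in>G. \<forall>y\<in>G. \<forall>z\<in>G. lt x y \<and> lt y z \<longrightarrow> dist x y \<le> c * dist x z"
    using cm unfolding c_monotone_def G_def by blast
  have gG: "\<And>s. s \<in> I \<Longrightarrow> g s \<in> G" unfolding G_def graph_of_def g_def by auto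
  show ?thesis unfolding cond_P_def
  proof (intro ballI impI)
    fix x y t assume x: "x \<in> I" and y: "y \<in> I" and xy: "x < y \<and> f x = f y" and t: "t \<in> {x..y}"
    have sub: "{x..y} \<subseteq> I"
    proof
      fix s assume "s \<in> {x..y}"
      then show "s \<in> I" using I[unfolded is_interval_1, rule_format, of x y s] x y by simp
    qed
    have cg: "\<And>J. J \<subseteq> I \<Longrightarrow> continuous_on J g"
      unfolding g_def by (intro continuous_intros continuous_on_subset[OF cont]) auto
    have dXY: "dist (g x) (g y) = \<bar>x - y\<bar>" using xy unfolding g_def by (simp add: dist_Pair_Pair dist_real_def)
    show "\<bar>f x - f t\<bar> \<le> c * \<bar>x - y\<bar>"
    proof (cases "t = x \<or> t = y")
      case True
      then show ?thesis using xy c by auto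
    next
      case False
      then have xt: "x < t" and ty: "t < y" using t by auto
      have sx: "{x..t} \<subseteq> I" using sub xt ty by auto
      have J1: "connected {x..t}" "continuous_on {x..t} g" "g ` {x..t} \<subseteq> G" "g y \<in> G" "g y \<notin> g ` {x..t}"
        using sx ty xt gG y cg[OF sx] by (auto simp: g_def)
      have st: "{t..y} \<subseteq> I" using sub xt ty by auto
      have J2: "connected {t..y}" "continuous_on {t..y} g" "g ` {t..y} \<subseteq> G" "g x \<in> G" "g x \<notin> g ` {t..y}"
        using st ty xt gG x cg[OF st] by (auto simp: g_def)
      have xJ1: "x \<in> {x..t}" "t \<in> {x..t}" and yJ2: "y \<in> {t..y}" "t \<in> {t..y}" using xt ty by auto
      have ne: "g x \<noteq> g y" using xy unfolding g_def by auto
      have T: "g t \<in> G" using gG sub t by auto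
      have fd: "\<bar>f x - f t\<bar> = dist (f x) (f t)" "\<bar>f y - f t\<bar> = dist (f y) (f t)" by (simp_all add: dist_real_def)
      have "lt (g x) (g y) \<or> lt (g y) (g x)" using lin ne gG x y unfolding strict_linear_order_on_def by blast
      then show ?thesis
      proof
        assume l: "lt (g x) (g y)"
        have 1: "lt (g t) (g y)" by (rule same_side[OF lin mon c J1 xJ1(1) l xJ1(2)])
        have 2: "lt (g x) (g t)" by (rule same_side_flip[OF lin mon c J2 yJ2(1) l yJ2(2)])
        have "dist (g x) (g t) \<le> c * dist (g x) (g y)" using mon 1 2 T gG x y by blast
        moreover have "dist (f x) (f t) \<le> dist (g x) (g t)" unfolding g_def by (rule snd_dist_le)
        ultimately show ?thesis using dXY fd by simp
      next
        assume l: "lt (g y) (g x)"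
        have 1: "lt (g t) (g x)" by (rule same_side[OF lin mon c J2 yJ2(1) l yJ2(2)])
        have 2: "lt (g y) (g t)" by (rule same_side_flip[OF lin mon c J1 xJ1(1) l xJ1(2)])
        have "dist (g y) (g t) \<le> c * dist (g y) (g x)" using mon 1 2 T gG x y by blast
        moreover have "dist (f y) (f t) \<le> dist (g y) (g t)" unfolding g_def by (rule snd_dist_le)
        ultimately show ?thesis using dXY fd xy by (simp add: dist_commute)
      qed
    qed
  qed
qed

lemma part2:
  fixes I :: "real set" and f :: "real \<Rightarrow> real" and c :: real
  assumes I: "is_interval I" and cont: "continuous_on I f" and c: "c \<ge> 1"
    and P: "cond_P (c - 1) I f"
  shows "sym_c_monotone c (graph_of I f)"
proof -
  define G where "G = graph_of I f"
  define lt :: "real \<times> real \<Rightarrow> real \<times> real \<Rightarrow> bool" where "lt = (\<lambda>p q. fst p < fst q)"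
  have P': "cond_P (c - 1) I (\<lambda>s. - f s)"
    using P unfolding cond_P_def by (simp add: abs_minus_commute)
  have cont': "continuous_on I (\<lambda>s. - f s)" using cont by (intro continuous_intros)
  have lin: "strict_linear_order_on G lt"
    unfolding strict_linear_order_on_def lt_def G_def graph_of_def by auto
  have key: "max (dist (x, f x) (y, f y)) (dist (y, f y) (z, f z)) \<le> c * dist (x, f x) (z, f z)"
    if x: "x \<in> I" and z: "z \<in> I" and xy: "x < y" and yz: "y < z" for x y z
  proof -
    have c0: "c - 1 \<ge> 0" using c by simp
    have u: "f y \<le> max (f x) (f z) + (c - 1) * (z - x)"
      by (rule upper_bound[OF I cont P c0 x z xy yz])
    have l: "- f y \<le> max (- f x) (- f z) + (c - 1) * (z - x)"
      by (rule upper_bound[OF I cont' P' c0 x z xy yz])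
    define b where "b = \<bar>f z - f x\<bar>"
    have v1: "\<bar>f x - f y\<bar> \<le> b + (c - 1) * (z - x)" using u l unfolding b_def by (auto split: if_splits simp: max_def abs_if)
    have v2: "\<bar>f y - f z\<bar> \<le> b + (c - 1) * (z - x)" using u l unfolding b_def by (auto split: if_splits simp: max_def abs_if)
    have dxz: "dist (x, f x) (z, f z) = sqrt ((z - x)^2 + b^2)"
      unfolding b_def by (simp add: dist_Pair_Pair dist_real_def power2_commute)
    have d1: "dist (x, f x) (y, f y) = sqrt (\<bar>x - y\<bar>^2 + \<bar>f x - f y\<bar>^2)"
      by (simp add: dist_Pair_Pair dist_real_def)
    have d2: "dist (y, f y) (z, f z) = sqrt (\<bar>y - z\<bar>^2 + \<bar>f y - f z\<bar>^2)"
      by (simp add: dist_Pair_Pair dist_real_def)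
    have "sqrt (\<bar>x - y\<bar>^2 + \<bar>f x - f y\<bar>^2) \<le> c * sqrt ((z - x)^2 + b^2)"
      by (rule sq_bound) (use xy yz v1 c in \<open>auto simp: b_def\<close>)
    moreover have "sqrt (\<bar>y - z\<bar>^2 + \<bar>f y - f z\<bar>^2) \<le> c * sqrt ((z - x)^2 + b^2)"
      by (rule sq_bound) (use xy yz v2 c in \<open>auto simp: b_def\<close>)
    ultimately show ?thesis using d1 d2 dxz by simp
  qed
  show ?thesis unfolding sym_c_monotone_def
  proof (intro exI[of _ lt] conjI lin[unfolded G_def] ballI impI)
    fix p q r assume p: "p \<in> graph_of I f" and q: "q \<in> graph_of I f" and r: "r \<in> graph_of I f"
      and o: "lt p q \<and> lt q r"
    obtain x y z where "p = (x, f x)" "q = (y, f y)" "r = (z, f z)" "x \<in> I" "y \<in> I" "z \<in> I"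
      using p q r unfolding graph_of_def by auto
    then show "max (dist p q) (dist q r) \<le> c * dist p r"
      using key o unfolding lt_def by auto
  qed
qed

theorem lemma2p3:
  fixes I :: "real set" and f :: "real \<Rightarrow> real" and c :: real
  assumes "is_interval I" and "\<exists>x\<in>I. \<exists>y\<in>I. x < y"
    and "continuous_on I f" and "c \<ge> 1"
  shows "(c_monotone c (graph_of I f) \<longrightarrow> cond_P c I f)
       \<and> (cond_P (c - 1) I f \<longrightarrow> sym_c_monotone c (graph_of I f))"
  using part1[OF assms(1,3,4)] part2[OF assms(1,3,4)] by blast

end
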